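(* Let $p\ge1$, $m=2p$, $j=\mathrm{diag}(I_p,-I_p)$, $n>0$. Let $A$ be an $n\times n$ matrix with $\det A\neq0$, $S_0=S_0^*$ an $n\times n$ matrix and $\Pi_0$ an $n\times m$ matrix with $AS_0-S_0A^*=i\Pi_0j\Pi_0^*$. Define for $k\ge0$ $$\Pi_{k+1}=\Pi_k+iA^{-1}\Pi_kj,\qquad S_{k+1}=S_k+A^{-1}S_k(A^* )^{-1}+A^{-1}\Pi_k\Pi_k^*(A^* )^{-1}.$$ Suppose $\det S_r\neq0$ for $0\le r\le N$. Then the matrices $C_k=I_m+\Pi_k^*S_k^{-1}\Pi_k-\Pi_{k+1}^*S_{k+1}^{-1}\Pi_{k+1}$, $0\le k<N$, satisfy $C_k=C_k^*$ and $C_kjC_k=j$.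
   Context: $I_r$ denotes the $r\times r$ identity matrix. *)

theory Defs
  imports "HOL-Analysis.Analysis"
begin

definition adj :: "complex^'m^'n \<Rightarrow> complex^'n^'m" where
  "adj M = (\<chi> i k. cnj (M $ k $ i))"

text \<open>The signature matrix j = diag(I_p, -I_p); the index type of size m = 2p is 'p + 'p.\<close>
definition jmat :: "complex^('p::finite + 'p)^('p + 'p)" where
  "jmat = (\<chi> a b. if a = b then (case a of Inl _ \<Rightarrow> 1 | Inr _ \<Rightarrow> -1) else 0)"

fun PiS :: "complex^'n^'n \<Rightarrow> complex^'n^'n \<Rightarrow> complex^('p::finite + 'p)^'n \<Rightarrow> nat
            \<Rightarrow> (complex^('p + 'p)^'n) \<times> (complex^'n^'n)" where
  "PiS A S0 Pi0 0 = (Pi0, S0)"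
| "PiS A S0 Pi0 (Suc k) =
     (let (P, S) = PiS A S0 Pi0 k in
       (P + mat \<i> ** matrix_inv A ** P ** jmat,
        S + matrix_inv A ** S ** matrix_inv (adj A)
          + matrix_inv A ** P ** adj P ** matrix_inv (adj A)))"

definition Pik where "Pik A S0 Pi0 k = fst (PiS A S0 Pi0 k)"
definition Sk where "Sk A S0 Pi0 k = snd (PiS A S0 Pi0 k)"

end

theory Submission
  imports Defs
begin

definition sm :: "complex \<Rightarrow> complex^'b^'a \<Rightarrow> complex^'b^'a" where
  "sm c X = (\<chi> i k. c * X $ i $ k)"

lemma mm_ldiff: "(X::complex^'b^'a) ** (Y - Z) = X ** Y - X ** Z"
  by (simp add: matrix_matrix_mult_def vec_eq_iff algebra_simps sum_subtractf)
lemma mm_rdiff: "((Y::complex^'b^'a) - Z) ** X = Y ** X - Z ** X"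
  by (simp add: matrix_matrix_mult_def vec_eq_iff algebra_simps sum_subtractf)
lemma mm_radd: "((Y::complex^'b^'a) + Z) ** X = Y ** X + Z ** X"
  by (simp add: matrix_matrix_mult_def vec_eq_iff algebra_simps sum.distrib)
lemma mm_ladd: "(X::complex^'b^'a) ** (Y + Z) = X ** Y + X ** Z"
  by (simp add: matrix_matrix_mult_def vec_eq_iff algebra_simps sum.distrib)
lemma mm_lneg: "(X::complex^'b^'a) ** (- Y) = - (X ** Y)"
  by (simp add: matrix_matrix_mult_def vec_eq_iff sum_negf)
lemma mm_rneg: "(- (Y::complex^'b^'a)) ** X = - (Y ** X)"
  by (simp add: matrix_matrix_mult_def vec_eq_iff sum_negf)
lemma mm_assoc: "((X::complex^'b^'a) ** Y) ** Z = X ** (Y ** Z)"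
  by (simp add: matrix_mul_assoc)

lemma sm_mat: "mat c ** (X::complex^'b^'a) = sm c X"
  unfolding sm_def matrix_matrix_mult_def mat_def
  by (auto simp: vec_eq_iff if_distrib if_distribR sum.delta' cong: if_cong)
lemma sm_left: "sm c (X::complex^'b^'a) ** Y = sm c (X ** Y)"
  by (simp add: sm_def matrix_matrix_mult_def vec_eq_iff sum_distrib_left mult.assoc)
lemma sm_right: "(X::complex^'b^'a) ** sm c Y = sm c (X ** Y)"
  by (simp add: sm_def matrix_matrix_mult_def vec_eq_iff sum_distrib_left mult_ac)
lemma sm_sm: "sm a (sm b (X::complex^'b^'a)) = sm (a * b) X"
  by (simp add: sm_def vec_eq_iff mult.assoc)
lemma sm_one: "sm 1 (X::complex^'b^'a) = X"
  by (simp add: sm_def vec_eq_iff)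
lemma sm_neg: "sm (- c) (X::complex^'b^'a) = - sm c X"
  by (simp add: sm_def vec_eq_iff)
lemma sm_add: "sm c ((X::complex^'b^'a) + Y) = sm c X + sm c Y"
  by (simp add: sm_def vec_eq_iff algebra_simps)
lemma sm_diff: "sm c ((X::complex^'b^'a) - Y) = sm c X - sm c Y"
  by (simp add: sm_def vec_eq_iff algebra_simps)
lemma sm_uminus: "sm c (- (X::complex^'b^'a)) = - sm c X"
  by (simp add: sm_def vec_eq_iff algebra_simps)

lemma adj_mult: "adj ((X::complex^'b^'a) ** Y) = adj Y ** adj X"
  by (simp add: adj_def matrix_matrix_mult_def vec_eq_iff mult.commute)
lemma adj_add: "adj ((X::complex^'b^'a) + Y) = adj X + adj Y"
  by (simp add: adj_def vec_eq_iff)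
lemma adj_diff: "adj ((X::complex^'b^'a) - Y) = adj X - adj Y"
  by (simp add: adj_def vec_eq_iff)
lemma adj_uminus: "adj (- (X::complex^'b^'a)) = - adj X"
  by (simp add: adj_def vec_eq_iff)
lemma adj_sm: "adj (sm c (X::complex^'b^'a)) = sm (cnj c) (adj X)"
  by (simp add: adj_def sm_def vec_eq_iff)
lemma adj_adj: "adj (adj (X::complex^'b^'a)) = X"
  by (simp add: adj_def vec_eq_iff)
lemma adj_mat: "adj (mat c :: complex^'a^'a) = mat (cnj c)"
  by (simp add: adj_def mat_def vec_eq_iff)
lemma adj_jmat: "adj (jmat :: complex^('p::finite+'p)^('p+'p)) = jmat"
  by (auto simp: adj_def jmat_def vec_eq_iff split: sum.splits)
lemma jmat_entry: "(jmat :: complex^('p::finite+'p)^('p+'p)) $ a $ b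
   = (if a = b then (case a of Inl _ \<Rightarrow> 1 | Inr _ \<Rightarrow> -1) else 0)"
  by (simp add: jmat_def)
lemma jj: "(jmat :: complex^('p::finite+'p)^('p+'p)) ** jmat = mat 1"
proof -
  have "(jmat ** jmat :: complex^('p+'p)^('p+'p)) $ a $ c = (if a = c then 1 else 0)" for a c
  proof -
    have "(jmat ** jmat :: complex^('p+'p)^('p+'p)) $ a $ c
        = (\<Sum>b\<in>UNIV. if b = a then (jmat :: complex^('p+'p)^('p+'p)) $ a $ a * jmat $ a $ c else 0)"
      unfolding matrix_matrix_mult_def vec_lambda_beta by (rule sum.cong[OF refl]) (auto simp: jmat_entry)
    also have "\<dots> = (jmat :: complex^('p+'p)^('p+'p)) $ a $ a * jmat $ a $ c" by simp
    also have "\<dots> = (if a = c then 1 else 0)" by (cases a) (auto simp: jmat_entry)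
    finally show ?thesis .
  qed
  thus ?thesis by (simp add: vec_eq_iff mat_def)
qed
lemma jj2: "(jmat :: complex^('p::finite+'p)^('p+'p)) ** (jmat ** X) = X"
  by (simp add: matrix_mul_assoc jj)

lemmas nf = mm_ldiff mm_rdiff mm_radd mm_ladd mm_lneg mm_rneg mm_assoc sm_mat sm_left sm_right
  sm_sm sm_one sm_neg sm_add sm_diff sm_uminus adj_mult adj_add adj_diff adj_uminus adj_sm adj_adj
  adj_mat adj_jmat jj jj2 matrix_mul_lid matrix_mul_rid

lemma inv_unique:
  fixes X Y :: "complex^'n^'n"
  assumes "Y ** X = mat 1"
  shows "matrix_inv X = Y" "X ** matrix_inv X = mat 1" "matrix_inv X ** X = mat 1"
proof -
  have "X ** Y = mat 1" using assms matrix_left_right_inverse by blast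
  hence ex: "\<exists>A'. X ** A' = mat 1 \<and> A' ** X = mat 1" using assms by blast
  have h: "X ** matrix_inv X = mat 1 \<and> matrix_inv X ** X = mat 1"
    unfolding matrix_inv_def by (rule someI_ex[OF ex])
  thus "X ** matrix_inv X = mat 1" "matrix_inv X ** X = mat 1" by auto
  have "Y = Y ** (X ** matrix_inv X)" using h by simp
  also have "\<dots> = matrix_inv X" by (simp add: matrix_mul_assoc assms)
  finally show "matrix_inv X = Y" by simp
qed

lemma inv_props:
  fixes X :: "complex^'n^'n"
  assumes "det X \<noteq> 0"
  shows "X ** matrix_inv X = mat 1" "matrix_inv X ** X = mat 1"
    "adj (matrix_inv X) = matrix_inv (adj X)"
proof -
  obtain Y where Y: "Y ** X = mat 1" using assms invertible_det_nz invertible_left_inverse by blast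
  show a: "X ** matrix_inv X = mat 1" "matrix_inv X ** X = mat 1" using inv_unique[OF Y] by auto
  have "adj (matrix_inv X) ** adj X = mat 1" using a(1) by (simp add: adj_mult[symmetric] adj_mat)
  thus "adj (matrix_inv X) = matrix_inv (adj X)" using inv_unique by metis
qed


lemma j_unitary:
  fixes A b S T :: "complex^'n^'n" and P :: "complex^('p::finite+'p)^'n"
  assumes Ab: "A ** b = mat 1" "b ** A = mat 1"
    and ST: "S ** T = mat 1" "T ** S = mat 1" and hT: "adj T = T"
    and hyp: "A ** S - S ** adj A = sm \<i> (P ** jmat ** adj P)"
  shows "adj (mat 1 - sm \<i> (jmat ** adj P ** T ** b ** P)) ** jmat
           ** (mat 1 - sm \<i> (jmat ** adj P ** T ** b ** P)) = jmat"
proof -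
  have Ab': "\<And>X::complex^'q^'n. A ** (b ** X) = X" "\<And>X::complex^'q^'n. b ** (A ** X) = X"
    using Ab by (simp_all add: matrix_mul_assoc)
  have adjAb: "adj b ** adj A = mat 1" "adj A ** adj b = mat 1"
    using Ab by (simp_all add: adj_mult[symmetric] adj_mat)
  have adjAb': "\<And>X::complex^'q^'n. adj b ** (adj A ** X) = X" "\<And>X::complex^'q^'n. adj A ** (adj b ** X) = X"
    using adjAb by (simp_all add: matrix_mul_assoc)
  have ST': "\<And>X::complex^'q^'n. S ** (T ** X) = X" "\<And>X::complex^'q^'n. T ** (S ** X) = X"
    using ST by (simp_all add: matrix_mul_assoc)
  have h1: "P ** jmat ** adj P = sm (-\<i>) (A ** S - S ** adj A)"
    using hyp by (simp add: sm_sm sm_one)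
  have R: "\<And>X::complex^'q^'n. T ** (P ** (jmat ** (adj P ** (T ** X))))
      = sm \<i> (adj A ** (T ** X)) - sm \<i> (T ** (A ** X))"
  proof -
    fix X :: "complex^'q^'n"
    have "T ** (P ** (jmat ** (adj P ** (T ** X)))) = T ** ((P ** jmat ** adj P) ** (T ** X))"
      by (simp add: matrix_mul_assoc)
    also have "\<dots> = sm \<i> (adj A ** (T ** X)) - sm \<i> (T ** (A ** X))"
      unfolding h1 by (simp add: nf ST' algebra_simps)
    finally show "T ** (P ** (jmat ** (adj P ** (T ** X)))) = sm \<i> (adj A ** (T ** X)) - sm \<i> (T ** (A ** X))" .
  qed
  show ?thesis
    by (simp add: nf hT R Ab' adjAb' algebra_simps)
qed


lemma step_rel:
  fixes A b S T S' T' :: "complex^'n^'n" and P P' :: "complex^('p::finite+'p)^'n"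
  assumes Ab: "A ** b = mat 1" "b ** A = mat 1"
    and ST: "S ** T = mat 1" "T ** S = mat 1"
    and ST2: "S' ** T' = mat 1" "T' ** S' = mat 1"
    and hyp: "A ** S - S ** adj A = sm \<i> (P ** jmat ** adj P)"
    and P'def: "P' = P + sm \<i> (b ** P ** jmat)"
    and S'def: "S' = S + b ** S ** adj b + b ** P ** adj P ** adj b"
  shows "(mat 1 - sm \<i> (jmat ** adj P' ** T' ** b ** P')) ** jmat
     = jmat ** (mat 1 + adj P ** T ** P - adj P' ** T' ** P') ** (mat 1 - sm \<i> (jmat ** adj P ** T ** b ** P))"
proof -
  have Ab': "\<And>X::complex^'q^'n. A ** (b ** X) = X" "\<And>X::complex^'q^'n. b ** (A ** X) = X"
    using Ab by (simp_all add: matrix_mul_assoc)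
  have adjAb: "adj b ** adj A = mat 1" "adj A ** adj b = mat 1"
    using Ab by (simp_all add: adj_mult[symmetric] adj_mat)
  have adjAb': "\<And>X::complex^'q^'n. adj b ** (adj A ** X) = X" "\<And>X::complex^'q^'n. adj A ** (adj b ** X) = X"
    using adjAb by (simp_all add: matrix_mul_assoc)
  have ST': "\<And>X::complex^'q^'n. S ** (T ** X) = X" "\<And>X::complex^'q^'n. T ** (S ** X) = X"
    using ST by (simp_all add: matrix_mul_assoc)
  have ST2': "\<And>X::complex^'q^'n. T' ** (S' ** X) = X"
    using ST2 by (simp_all add: matrix_mul_assoc)
  have h1: "P ** jmat ** adj P = sm (-\<i>) (A ** S - S ** adj A)"
    using hyp by (simp add: sm_sm sm_one)
  have R: "\<And>X::complex^'q^'n. T ** (P ** (jmat ** (adj P ** (T ** X))))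
      = sm \<i> (adj A ** (T ** X)) - sm \<i> (T ** (A ** X))"
  proof -
    fix X :: "complex^'q^'n"
    have "T ** (P ** (jmat ** (adj P ** (T ** X)))) = T ** ((P ** jmat ** adj P) ** (T ** X))"
      by (simp add: matrix_mul_assoc)
    also have "\<dots> = sm \<i> (adj A ** (T ** X)) - sm \<i> (T ** (A ** X))"
      unfolding h1 by (simp add: nf ST' algebra_simps)
    finally show "T ** (P ** (jmat ** (adj P ** (T ** X)))) = sm \<i> (adj A ** (T ** X)) - sm \<i> (T ** (A ** X))" .
  qed
  have hS: "\<And>X::complex^'q^'n. S ** (adj A ** X) = A ** (S ** X) - sm \<i> (P ** (jmat ** (adj P ** X)))"
  proof -
    fix X :: "complex^'q^'n"
    have "(A ** S - S ** adj A) ** X = sm \<i> (P ** jmat ** adj P) ** X" using hyp by simp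
    thus "S ** (adj A ** X) = A ** (S ** X) - sm \<i> (P ** (jmat ** (adj P ** X)))"
      by (simp add: nf algebra_simps)
  qed
  define X' where "X' = P' - sm \<i> (P' ** jmat ** adj P ** T ** b ** P) - sm \<i> (b ** P' ** jmat)"
  have X'eq: "X' = S' ** (adj A ** (T ** (b ** P)))"
    unfolding X'_def P'def S'def by (simp add: nf hS ST' Ab' adjAb' algebra_simps)
  have key: "T' ** X' = adj A ** (T ** (b ** P))"
    unfolding X'eq by (simp add: ST2')
  have D: "jmat ** (mat 1 + adj P ** T ** P - adj P' ** T' ** P') ** (mat 1 - sm \<i> (jmat ** adj P ** T ** b ** P))
      - (mat 1 - sm \<i> (jmat ** adj P' ** T' ** b ** P')) ** jmat
    = jmat ** (adj P ** T ** P - sm \<i> (jmat ** adj P ** T ** b ** P) - sm \<i> (adj P ** T ** P ** jmat ** adj P ** T ** b ** P))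
      - jmat ** adj P' ** (T' ** X')"
    unfolding X'_def by (simp add: nf algebra_simps)
  also have "\<dots> = 0"
    unfolding key P'def by (simp add: nf R Ab' adjAb' algebra_simps)
  finally show ?thesis by simp
qed


lemma final_alg:
  fixes C w w' :: "complex^('p::finite+'p)^('p+'p)"
  assumes hC: "adj C = C" and u: "adj w ** jmat ** w = jmat" and u': "adj w' ** jmat ** w' = jmat"
    and e: "w' ** jmat = jmat ** C ** w"
  shows "C ** jmat ** C = jmat"
proof -
  have e2: "jmat ** adj w' = adj w ** C ** jmat"
    using arg_cong[OF e, of adj] by (simp add: adj_mult adj_jmat hC matrix_mul_assoc)
  have "adj w ** (C ** jmat ** C) ** w = (adj w ** C ** jmat) ** jmat ** (jmat ** C ** w)"
    by (simp add: mm_assoc jj2)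
  also have "\<dots> = (jmat ** adj w') ** jmat ** (w' ** jmat)" by (simp add: e e2)
  also have "\<dots> = jmat ** (adj w' ** jmat ** w') ** jmat" by (simp add: matrix_mul_assoc)
  also have "\<dots> = jmat" by (simp add: u' jj)
  finally have M: "adj w ** (C ** jmat ** C) ** w = adj w ** jmat ** w" using u by simp
  define L where "L = jmat ** adj w ** jmat"
  have Lw: "L ** w = mat 1" unfolding L_def using u by (simp add: mm_assoc jj2 jj)
  hence wL: "w ** L = mat 1" using matrix_left_right_inverse by blast
  have "adj w ** adj L = mat 1" using Lw by (simp add: adj_mult[symmetric] adj_mat)
  hence aL: "adj L ** adj w = mat 1" using matrix_left_right_inverse by blast
  have "C ** jmat ** C = adj L ** (adj w ** (C ** jmat ** C) ** w) ** L"
    by (simp add: matrix_mul_assoc aL) (simp add: mm_assoc wL)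
  also have "\<dots> = adj L ** (adj w ** jmat ** w) ** L" by (simp add: M)
  also have "\<dots> = jmat"
    by (simp add: matrix_mul_assoc aL) (simp add: mm_assoc wL)
  finally show ?thesis .
qed


lemma PiS_Suc:
  "Pik A S0 Pi0 (Suc k) = Pik A S0 Pi0 k + mat \<i> ** matrix_inv A ** Pik A S0 Pi0 k ** jmat"
  "Sk A S0 Pi0 (Suc k) = Sk A S0 Pi0 k + matrix_inv A ** Sk A S0 Pi0 k ** matrix_inv (adj A)
     + matrix_inv A ** Pik A S0 Pi0 k ** adj (Pik A S0 Pi0 k) ** matrix_inv (adj A)"
  by (simp_all add: Pik_def Sk_def split_def Let_def)

lemma invariant:
  fixes A S0 :: "complex^'n^'n"
    and Pi0 :: "complex^('p::finite + 'p)^'n"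
  assumes dA: "det A \<noteq> 0"
    and h0: "adj S0 = S0"
    and hyp0: "A ** S0 - S0 ** adj A = mat \<i> ** Pi0 ** jmat ** adj Pi0"
  shows "adj (Sk A S0 Pi0 k) = Sk A S0 Pi0 k \<and>
    A ** Sk A S0 Pi0 k - Sk A S0 Pi0 k ** adj A = sm \<i> (Pik A S0 Pi0 k ** jmat ** adj (Pik A S0 Pi0 k))"
proof (induction k)
  case 0
  then show ?case using h0 hyp0 by (simp add: Pik_def Sk_def nf)
next
  case (Suc k)
  define S where "S = Sk A S0 Pi0 k"
  define P where "P = Pik A S0 Pi0 k"
  define b where "b = matrix_inv A"
  have hS: "adj S = S" and hyp: "A ** S - S ** adj A = sm \<i> (P ** jmat ** adj P)"
    using Suc unfolding S_def P_def by auto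
  have Ab: "A ** b = mat 1" "b ** A = mat 1" using inv_props[OF dA] unfolding b_def by auto
  have Ab': "\<And>X::complex^'q^'n. A ** (b ** X) = X" "\<And>X::complex^'q^'n. b ** (A ** X) = X"
    using Ab by (simp_all add: matrix_mul_assoc)
  have adjAb: "adj b ** adj A = mat 1" "adj A ** adj b = mat 1"
    using Ab by (simp_all add: adj_mult[symmetric] adj_mat)
  have adjAb': "\<And>X::complex^'q^'n. adj b ** (adj A ** X) = X" "\<And>X::complex^'q^'n. adj A ** (adj b ** X) = X"
    using adjAb by (simp_all add: matrix_mul_assoc)
  have ib: "matrix_inv (adj A) = adj b" using inv_props(3)[OF dA] unfolding b_def by simp
  have h1: "P ** jmat ** adj P = sm (-\<i>) (A ** S - S ** adj A)"
    using hyp by (simp add: sm_sm sm_one)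
  have hP: "\<And>X::complex^'q^'n. P ** (jmat ** (adj P ** X)) = sm \<i> (S ** (adj A ** X)) - sm \<i> (A ** (S ** X))"
  proof -
    fix X :: "complex^'q^'n"
    have "P ** (jmat ** (adj P ** X)) = (P ** jmat ** adj P) ** X" by (simp add: matrix_mul_assoc)
    thus "P ** (jmat ** (adj P ** X)) = sm \<i> (S ** (adj A ** X)) - sm \<i> (A ** (S ** X))"
      unfolding h1 by (simp add: nf algebra_simps)
  qed
  have hP0: "P ** (jmat ** adj P) = sm \<i> (S ** adj A) - sm \<i> (A ** S)"
    using h1 by (simp add: nf algebra_simps)
  have P': "Pik A S0 Pi0 (Suc k) = P + sm \<i> (b ** P ** jmat)"
    unfolding PiS_Suc P_def b_def by (simp add: nf)
  have S': "Sk A S0 Pi0 (Suc k) = S + b ** S ** adj b + b ** P ** adj P ** adj b"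
    unfolding PiS_Suc S_def P_def b_def ib by simp
  show ?case unfolding P' S'
    by (simp add: nf hS Ab' adjAb adjAb' hP hP0 algebra_simps)
qed

theorem proposition2p3:
  fixes A S0 :: "complex^'n^'n"
    and Pi0 :: "complex^('p::finite + 'p)^'n"
    and N :: nat
  assumes "det A \<noteq> 0"
    and "adj S0 = S0"
    and "A ** S0 - S0 ** adj A = mat \<i> ** Pi0 ** jmat ** adj Pi0"
    and "\<forall>r \<le> N. det (Sk A S0 Pi0 r) \<noteq> 0"
  shows "\<forall>k < N.
    (let C = mat 1 + adj (Pik A S0 Pi0 k) ** matrix_inv (Sk A S0 Pi0 k) ** Pik A S0 Pi0 k
             - adj (Pik A S0 Pi0 (Suc k)) ** matrix_inv (Sk A S0 Pi0 (Suc k)) ** Pik A S0 Pi0 (Suc k)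
     in adj C = C \<and> C ** jmat ** C = jmat)"
proof (intro allI impI)
  fix k assume kN: "k < N"
  define S where "S = Sk A S0 Pi0 k"
  define P where "P = Pik A S0 Pi0 k"
  define S' where "S' = Sk A S0 Pi0 (Suc k)"
  define P' where "P' = Pik A S0 Pi0 (Suc k)"
  define b where "b = matrix_inv A"
  define T where "T = matrix_inv S"
  define T' where "T' = matrix_inv S'"
  have dS: "det S \<noteq> 0" "det S' \<noteq> 0" using assms(4) kN unfolding S_def S'_def by auto
  have inv1: "adj S = S" "A ** S - S ** adj A = sm \<i> (P ** jmat ** adj P)"
    using invariant[OF assms(1-3), of k] unfolding S_def P_def by auto
  have inv2: "adj S' = S'" "A ** S' - S' ** adj A = sm \<i> (P' ** jmat ** adj P')"
    using invariant[OF assms(1-3), of "Suc k"] unfolding S'_def P'_def by auto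
  have Ab: "A ** b = mat 1" "b ** A = mat 1" using inv_props[OF assms(1)] unfolding b_def by auto
  have ib: "matrix_inv (adj A) = adj b" using inv_props(3)[OF assms(1)] unfolding b_def by simp
  have ST: "S ** T = mat 1" "T ** S = mat 1" "adj T = T"
    using inv_props[OF dS(1)] inv1(1) unfolding T_def by auto
  have ST2: "S' ** T' = mat 1" "T' ** S' = mat 1" "adj T' = T'"
    using inv_props[OF dS(2)] inv2(1) unfolding T'_def by auto
  have P'def: "P' = P + sm \<i> (b ** P ** jmat)"
    unfolding P'_def PiS_Suc P_def b_def by (simp add: nf)
  have S'def: "S' = S + b ** S ** adj b + b ** P ** adj P ** adj b"
    unfolding S'_def PiS_Suc S_def P_def b_def ib by simp
  define C where "C = mat 1 + adj P ** T ** P - adj P' ** T' ** P'"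
  define w where "w = mat 1 - sm \<i> (jmat ** adj P ** T ** b ** P)"
  define w' where "w' = mat 1 - sm \<i> (jmat ** adj P' ** T' ** b ** P')"
  have hC: "adj C = C" unfolding C_def by (simp add: nf ST(3) ST2(3))
  have u: "adj w ** jmat ** w = jmat"
    unfolding w_def by (rule j_unitary[OF Ab ST(1,2,3) inv1(2)])
  have u': "adj w' ** jmat ** w' = jmat"
    unfolding w'_def by (rule j_unitary[OF Ab ST2(1,2,3) inv2(2)])
  have e: "w' ** jmat = jmat ** C ** w"
    unfolding w_def w'_def C_def by (rule step_rel[OF Ab ST(1,2) ST2(1,2) inv1(2) P'def S'def])
  have "C ** jmat ** C = jmat" by (rule final_alg[OF hC u u' e])
  thus "let C = mat 1 + adj (Pik A S0 Pi0 k) ** matrix_inv (Sk A S0 Pi0 k) ** Pik A S0 Pi0 k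
             - adj (Pik A S0 Pi0 (Suc k)) ** matrix_inv (Sk A S0 Pi0 (Suc k)) ** Pik A S0 Pi0 (Suc k)
     in adj C = C \<and> C ** jmat ** C = jmat"
    using hC unfolding Let_def C_def T_def T'_def S_def S'_def P_def P'_def by simp
qed

end
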